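(* For every topology $\mathcal{T}$ on $[n]$, $$\mathcal{P}_s(\mathcal{T})=\bigsqcup_{f\in\mathcal{L}(\mathcal{T})}\{g\mid g\leq f\}=\bigsqcup_{f\in\mathcal{L}(\mathcal{T})}\mathcal{P}_s(\mathcal{T}_f),$$ the unions being disjoint.
   Context: $[n]=\{1,\ldots,n\}$. For a topology $\mathcal{T}$ on $[n]$: $i\leq_{\mathcal{T}}j$ iff every open set containing $i$ contains $j$; $i\sim_{\mathcal{T}}j$ iff $i\leq_{\mathcal{T}}j$ and $j\leq_{\mathcal{T}}i$; $i<_{\mathcal{T}}j$ iff $i\leq_{\mathcal{T}}j$ and not $j\leq_{\mathcal{T}}i$. A packed word of length $n$ is a word $f=f(1)\ldots f(n)$ of positive integers with $\{f(1),\ldots,f(n)\}=\{1,\ldots,\max f\}$. A (strict) T-partition of $\mathcal{T}$ is a packed word $g$ of length $n$ such that: $i\leq_{\mathcal{T}}j\Rightarrow g(i)\leq g(j)$; $i<_{\mathcal{T}}j$ and $i>j\Rightarrow g(i)<g(j)$; if $i<j<k$, $i\sim_{\mathcal{T}}k$ and $g(i)=g(j)=g(k)$ then $i\sim_{\mathcal{T}}j$ and $j\sim_{\mathcal{T}}k$; $\mathcal{P}_s(\mathcal{T})$ is their set. A linear extension of $\mathcal{T}$ is a packed word $f$ of length $n$ with $f(i)=f(j)\Leftrightarrow i\sim_{\mathcal{T}}j$ and $i<_{\mathcal{T}}j\Rightarrow f(i)<f(j)$; $\mathcal{L}(\mathcal{T})$ is their set. For packed words $f,g$ of length $n$, $g\leq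 f$ means: for all $i,j$, $f(i)\leq f(j)\Rightarrow g(i)\leq g(j)$; $f(i)>f(j)$ and $i<j\Rightarrow g(i)>g(j)$; $f(i)=f(j)\Rightarrow g(i)=g(j)$ (the $g$ in the middle union range over packed words of length $n$). For a packed word $f$, $\mathcal{T}_f$ is the topology on $[n]$ with preorder $i\leq j$ iff $f(i)\leq f(j)$. *)

theory Defs
  imports "HOL-Analysis.Abstract_Topology" "HOL-Library.Disjoint_Sets"
begin

text \<open>Words of length n are functions nat => nat; only the values on {1..n} matter,
  and we normalise them to be 0 outside {1..n} so that sets of words are well defined.\<close>

definition packed :: "nat \<Rightarrow> (nat \<Rightarrow> nat) \<Rightarrow> bool" where
  "packed n f \<longleftrightarrow> (\<forall>i. i \<notin> {1..n} \<longrightarrow> f i = 0) \<and> (\<exists>m. f ` {1..n} = {1..m})"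

definition leT :: "nat topology \<Rightarrow> nat \<Rightarrow> nat \<Rightarrow> bool" where
  "leT T i j \<longleftrightarrow> (\<forall>U. openin T U \<longrightarrow> i \<in> U \<longrightarrow> j \<in> U)"

definition simT :: "nat topology \<Rightarrow> nat \<Rightarrow> nat \<Rightarrow> bool" where
  "simT T i j \<longleftrightarrow> leT T i j \<and> leT T j i"

definition ltT :: "nat topology \<Rightarrow> nat \<Rightarrow> nat \<Rightarrow> bool" where
  "ltT T i j \<longleftrightarrow> leT T i j \<and> \<not> leT T j i"

definition Tpartitions :: "nat \<Rightarrow> nat topology \<Rightarrow> (nat \<Rightarrow> nat) set" where
  "Tpartitions n T = {g. packed n g
     \<and> (\<forall>i\<in>{1..n}. \<forall>j\<in>{1..n}. leT T i j \<longrightarrow> g i \<le> g j)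
     \<and> (\<forall>i\<in>{1..n}. \<forall>j\<in>{1..n}. ltT T i j \<and> i > j \<longrightarrow> g i < g j)
     \<and> (\<forall>i\<in>{1..n}. \<forall>j\<in>{1..n}. \<forall>k\<in>{1..n}.
          i < j \<and> j < k \<and> simT T i k \<and> g i = g j \<and> g j = g k
          \<longrightarrow> simT T i j \<and> simT T j k)}"

definition linext :: "nat \<Rightarrow> nat topology \<Rightarrow> (nat \<Rightarrow> nat) set" where
  "linext n T = {f. packed n f
     \<and> (\<forall>i\<in>{1..n}. \<forall>j\<in>{1..n}. f i = f j \<longleftrightarrow> simT T i j)
     \<and> (\<forall>i\<in>{1..n}. \<forall>j\<in>{1..n}. ltT T i j \<longrightarrow> f i < f j)}"

definition word_le :: "nat \<Rightarrow> (nat \<Rightarrow> nat) \<Rightarrow> (nat \<Rightarrow> nat) \<Rightarrow> bool" where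
  "word_le n g f \<longleftrightarrow> (\<forall>i\<in>{1..n}. \<forall>j\<in>{1..n}.
       (f i \<le> f j \<longrightarrow> g i \<le> g j)
     \<and> (f i > f j \<and> i < j \<longrightarrow> g i > g j)
     \<and> (f i = f j \<longrightarrow> g i = g j))"

definition topology_of_word :: "nat \<Rightarrow> (nat \<Rightarrow> nat) \<Rightarrow> nat topology" where
  "topology_of_word n f = topology (\<lambda>U. U \<subseteq> {1..n}
      \<and> (\<forall>i\<in>U. \<forall>j\<in>{1..n}. f i \<le> f j \<longrightarrow> j \<in> U))"

end

theory Submission
  imports Defs
begin

lemma leT_refl: "leT T i i" by (simp add: leT_def)
lemma leT_trans: "leT T i j \<Longrightarrow> leT T j k \<Longrightarrow> leT T i k" by (simp add: leT_def)
lemma simT_sym: "simT T i j \<Longrightarrow> simT T j i" by (simp add: simT_def)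
lemma simT_trans: "simT T i j \<Longrightarrow> simT T j k \<Longrightarrow> simT T i k"
  by (meson leT_trans simT_def)
lemma simT_refl: "simT T i i" by (simp add: simT_def leT_refl)

lemma leT_tow:
  assumes "i \<in> {1..n}" "j \<in> {1..n}"
  shows "leT (topology_of_word n f) i j \<longleftrightarrow> f i \<le> f j"
proof -
  define P where "P = (\<lambda>U. U \<subseteq> {1..n} \<and> (\<forall>i\<in>U. \<forall>j\<in>{1..n}. f i \<le> f j \<longrightarrow> j \<in> U))"
  have "istopology P" unfolding istopology_def P_def by blast
  hence op: "openin (topology_of_word n f) = P"
    unfolding topology_of_word_def P_def[symmetric] by simp
  show ?thesis
  proof
    assume "leT (topology_of_word n f) i j"
    moreover have "P {k\<in>{1..n}. f i \<le> f k}" unfolding P_def by auto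
    ultimately show "f i \<le> f j" using assms unfolding leT_def op by auto
  next
    assume "f i \<le> f j" thus "leT (topology_of_word n f) i j"
      using assms unfolding leT_def op P_def by auto
  qed
qed

lemma Tpart_tow:
  "Tpartitions n (topology_of_word n f) = {g. packed n g \<and> word_le n g f}"
proof -
  have le: "\<And>i j. i\<in>{1..n} \<Longrightarrow> j\<in>{1..n} \<Longrightarrow> leT (topology_of_word n f) i j \<longleftrightarrow> f i \<le> f j"
    by (rule leT_tow)
  show ?thesis
  proof (intro set_eqI iffI)
    fix g assume g: "g \<in> Tpartitions n (topology_of_word n f)"
    show "g \<in> {g. packed n g \<and> word_le n g f}"
    proof -
      have p: "packed n g" using g unfolding Tpartitions_def by auto
      have a: "\<forall>i\<in>{1..n}. \<forall>j\<in>{1..n}. f i \<le> f j \<longrightarrow> g i \<le> g j"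
        using g le unfolding Tpartitions_def by auto
      have b: "\<forall>i\<in>{1..n}. \<forall>j\<in>{1..n}. f i < f j \<and> i > j \<longrightarrow> g i < g j"
      proof (intro ballI impI)
        fix i j assume ij: "i\<in>{1..n}" "j\<in>{1..n}" "f i < f j \<and> i > j"
        hence "ltT (topology_of_word n f) i j" unfolding ltT_def using le by auto
        thus "g i < g j" using g ij unfolding Tpartitions_def by auto
      qed
      have "word_le n g f" unfolding word_le_def
      proof (intro ballI conjI impI)
        fix i j assume ij: "i\<in>{1..n}" "j\<in>{1..n}"
        { assume "f i \<le> f j" thus "g i \<le> g j" using a ij by auto }
        { assume "f j < f i \<and> i < j" thus "g j < g i" using b ij by auto }
        { assume "f i = f j" thus "g i = g j" using a ij by (metis le_antisym order_refl) }
      qed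
      thus ?thesis using p by auto
    qed
  next
    fix g assume g: "g \<in> {g. packed n g \<and> word_le n g f}"
    hence p: "packed n g" and w: "word_le n g f" by auto
    have 3: "simT (topology_of_word n f) i j \<and> simT (topology_of_word n f) j k"
      if "i\<in>{1..n}" "j\<in>{1..n}" "k\<in>{1..n}" "i < j" "j < k"
        "simT (topology_of_word n f) i k" "g i = g j" "g j = g k" for i j k
    proof -
      have fik: "f i = f k" using that le unfolding simT_def by auto
      have "f j = f i"
      proof (rule ccontr)
        assume "f j \<noteq> f i"
        hence "f j < f i \<or> f j > f k" using fik by auto
        thus False using w that unfolding word_le_def by (metis less_irrefl)
      qed
      thus ?thesis using fik that le unfolding simT_def by auto
    qed
    have A: "\<forall>i\<in>{1..n}. \<forall>j\<in>{1..n}. leT (topology_of_word n f) i j \<longrightarrow> g i \<le> g j"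
    proof (intro ballI impI)
      fix i j assume ij: "i\<in>{1..n}" "j\<in>{1..n}" "leT (topology_of_word n f) i j"
      hence "f i \<le> f j" using le by auto
      thus "g i \<le> g j" using w ij unfolding word_le_def by blast
    qed
    have B: "\<forall>i\<in>{1..n}. \<forall>j\<in>{1..n}. ltT (topology_of_word n f) i j \<and> i > j \<longrightarrow> g i < g j"
    proof (intro ballI impI)
      fix i j assume ij: "i\<in>{1..n}" "j\<in>{1..n}" "ltT (topology_of_word n f) i j \<and> i > j"
      hence "f j > f i" "j < i" using le unfolding ltT_def by auto
      thus "g i < g j" using w ij(1,2) unfolding word_le_def by blast
    qed
    have C: "\<forall>i\<in>{1..n}. \<forall>j\<in>{1..n}. \<forall>k\<in>{1..n}.
          i < j \<and> j < k \<and> simT (topology_of_word n f) i k \<and> g i = g j \<and> g j = g k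
          \<longrightarrow> simT (topology_of_word n f) i j \<and> simT (topology_of_word n f) j k"
      using 3 by blast
    show "g \<in> Tpartitions n (topology_of_word n f)"
      unfolding Tpartitions_def using p A B C by blast
  qed
qed

definition rk :: "nat set \<Rightarrow> nat \<Rightarrow> nat" where
  "rk S x = card {v\<in>S. v \<le> x}"

lemma rk_mono: "finite S \<Longrightarrow> x \<le> y \<Longrightarrow> rk S x \<le> rk S y"
  unfolding rk_def by (rule card_mono) auto

lemma rk_strict: "finite S \<Longrightarrow> y \<in> S \<Longrightarrow> x < y \<Longrightarrow> rk S x < rk S y"
  unfolding rk_def
proof (rule psubset_card_mono)
  assume "finite S" "y \<in> S" "x < y"
  thus "finite {v \<in> S. v \<le> y}" by auto
  show "{v \<in> S. v \<le> x} \<subset> {v \<in> S. v \<le> y}"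
  proof -
    have "y \<in> {v \<in> S. v \<le> y}" "y \<notin> {v \<in> S. v \<le> x}" using \<open>y \<in> S\<close> \<open>x < y\<close> by auto
    moreover have "{v \<in> S. v \<le> x} \<subseteq> {v \<in> S. v \<le> y}" using \<open>x < y\<close> by auto
    ultimately show ?thesis by blast
  qed
qed

lemma rk_le_iff: "finite S \<Longrightarrow> x \<in> S \<Longrightarrow> y \<in> S \<Longrightarrow> rk S x \<le> rk S y \<longleftrightarrow> x \<le> y"
  by (meson linorder_not_le rk_mono rk_strict)

lemma rk_eq_iff: "finite S \<Longrightarrow> x \<in> S \<Longrightarrow> y \<in> S \<Longrightarrow> rk S x = rk S y \<longleftrightarrow> x = y"
  using rk_le_iff[of S x y] rk_le_iff[of S y x] by auto

lemma rk_image: assumes "finite S" shows "rk S ` S = {1..card S}"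
proof (rule card_subset_eq)
  show "finite {1..card S}" by simp
  show "rk S ` S \<subseteq> {1..card S}"
  proof
    fix z assume "z \<in> rk S ` S"
    then obtain x where x: "x \<in> S" "z = rk S x" by auto
    have "x \<in> {v\<in>S. v \<le> x}" using x by auto
    hence "1 \<le> z" unfolding x rk_def using assms
      by (metis (no_types, lifting) One_nat_def Suc_leI card_gt_0_iff empty_iff finite_subset mem_Collect_eq subsetI)
    moreover have "z \<le> card S" unfolding x rk_def using assms by (intro card_mono) auto
    ultimately show "z \<in> {1..card S}" by auto
  qed
  have "inj_on (rk S) S" using rk_eq_iff[OF assms] by (meson inj_onI)
  thus "card (rk S ` S) = card {1..card S}" by (simp add: card_image)
qed

lemma card_image_same_kernel:
  assumes "\<forall>k\<in>B. \<forall>l\<in>B. f k = f l \<longleftrightarrow> h k = h l"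
  shows "card (f ` B) = card (h ` B)"
proof -
  have "bij_betw (\<lambda>v. h (inv_into B f v)) (f ` B) (h ` B)"
    unfolding bij_betw_def
  proof
    show "inj_on (\<lambda>v. h (inv_into B f v)) (f ` B)"
      by (smt (verit) assms f_inv_into_f inj_onI inv_into_into)
    show "(\<lambda>v. h (inv_into B f v)) ` f ` B = h ` B"
    proof
      show "(\<lambda>v. h (inv_into B f v)) ` f ` B \<subseteq> h ` B" by (auto intro: inv_into_into)
      show "h ` B \<subseteq> (\<lambda>v. h (inv_into B f v)) ` f ` B"
      proof
        fix z assume "z \<in> h ` B"
        then obtain k where k: "k \<in> B" "z = h k" by auto
        have "inv_into B f (f k) \<in> B" "f (inv_into B f (f k)) = f k"
          using k by (auto intro: inv_into_into f_inv_into_f)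
        hence "h (inv_into B f (f k)) = h k" using assms k by blast
        thus "z \<in> (\<lambda>v. h (inv_into B f v)) ` f ` B" using k by force
      qed
    qed
  qed
  thus ?thesis by (rule bij_betw_same_card)
qed

lemma packed_val:
  assumes "packed n f" "i \<in> {1..n}"
  shows "f i = card (f ` {k\<in>{1..n}. f k \<le> f i})"
proof -
  obtain m where m: "f ` {1..n} = {1..m}" using assms unfolding packed_def by auto
  have "f i \<in> {1..m}" using m assms by auto
  have "f ` {k\<in>{1..n}. f k \<le> f i} = {1..f i}"
  proof
    show "f ` {k\<in>{1..n}. f k \<le> f i} \<subseteq> {1..f i}" using m by auto
    show "{1..f i} \<subseteq> f ` {k\<in>{1..n}. f k \<le> f i}"
    proof
      fix v assume v: "v \<in> {1..f i}"
      hence "v \<in> f ` {1..n}" using m \<open>f i \<in> {1..m}\<close> by auto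
      thus "v \<in> f ` {k\<in>{1..n}. f k \<le> f i}" using v by auto
    qed
  qed
  thus ?thesis by simp
qed

lemma packed_unique:
  assumes "packed n f" "packed n h"
    "\<forall>i\<in>{1..n}. \<forall>j\<in>{1..n}. f i \<le> f j \<longleftrightarrow> h i \<le> h j"
  shows "f = h"
proof
  fix i show "f i = h i"
  proof (cases "i \<in> {1..n}")
    case False thus ?thesis using assms unfolding packed_def by auto
  next
    case True
    have B: "{k\<in>{1..n}. f k \<le> f i} = {k\<in>{1..n}. h k \<le> h i}" using assms(3) True by auto
    have "card (f ` {k\<in>{1..n}. f k \<le> f i}) = card (h ` {k\<in>{1..n}. f k \<le> f i})"
    proof (rule card_image_same_kernel, intro ballI)
      fix k l assume kl: "k \<in> {k\<in>{1..n}. f k \<le> f i}" "l \<in> {k\<in>{1..n}. f k \<le> f i}"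
      have "f k \<le> f l \<longleftrightarrow> h k \<le> h l" "f l \<le> f k \<longleftrightarrow> h l \<le> h k" using assms(3) kl by auto
      thus "f k = f l \<longleftrightarrow> h k = h l" by auto
    qed
    thus ?thesis using packed_val[OF assms(1) True] packed_val[OF assms(2) True] B by simp
  qed
qed

lemma linext_eq:
  "f \<in> linext n T \<Longrightarrow> i \<in> {1..n} \<Longrightarrow> j \<in> {1..n} \<Longrightarrow> f i = f j \<longleftrightarrow> simT T i j"
  unfolding linext_def by blast

lemma linext_lt:
  "f \<in> linext n T \<Longrightarrow> i \<in> {1..n} \<Longrightarrow> j \<in> {1..n} \<Longrightarrow> ltT T i j \<Longrightarrow> f i < f j"
  unfolding linext_def by blast

lemma linext_packed: "f \<in> linext n T \<Longrightarrow> packed n f"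
  unfolding linext_def by blast

lemma linext_le:
  assumes "f \<in> linext n T" "i \<in> {1..n}" "j \<in> {1..n}" "leT T i j"
  shows "f i \<le> f j"
proof (cases "leT T j i")
  case True
  hence "simT T i j" using assms(4) unfolding simT_def by auto
  thus ?thesis using linext_eq[OF assms(1-3)] by simp
next
  case False
  hence "ltT T i j" using assms(4) unfolding ltT_def by auto
  thus ?thesis using linext_lt[OF assms(1-3)] by simp
qed

lemma le_imp_Tpart:
  assumes f: "f \<in> linext n T" and p: "packed n g" and w: "word_le n g f"
  shows "g \<in> Tpartitions n T"
proof -
  have A: "\<forall>i\<in>{1..n}. \<forall>j\<in>{1..n}. leT T i j \<longrightarrow> g i \<le> g j"
  proof (intro ballI impI)
    fix i j assume ij: "i\<in>{1..n}" "j\<in>{1..n}" "leT T i j"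
    hence "f i \<le> f j" using linext_le[OF f] by auto
    thus "g i \<le> g j" using w ij unfolding word_le_def by blast
  qed
  have B: "\<forall>i\<in>{1..n}. \<forall>j\<in>{1..n}. ltT T i j \<and> i > j \<longrightarrow> g i < g j"
  proof (intro ballI impI)
    fix i j assume ij: "i\<in>{1..n}" "j\<in>{1..n}" "ltT T i j \<and> i > j"
    hence "f j > f i" "j < i" using linext_lt[OF f ij(1,2)] by auto
    thus "g i < g j" using w ij(1,2) unfolding word_le_def by blast
  qed
  have C: "\<forall>i\<in>{1..n}. \<forall>j\<in>{1..n}. \<forall>k\<in>{1..n}.
          i < j \<and> j < k \<and> simT T i k \<and> g i = g j \<and> g j = g k
          \<longrightarrow> simT T i j \<and> simT T j k"
  proof (intro ballI impI)
    fix i j k assume ijk: "i\<in>{1..n}" "j\<in>{1..n}" "k\<in>{1..n}"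
      and h: "i < j \<and> j < k \<and> simT T i k \<and> g i = g j \<and> g j = g k"
    have fik: "f i = f k" using linext_eq[OF f ijk(1,3)] h by blast
    have "f j = f i"
    proof (rule ccontr)
      assume "f j \<noteq> f i"
      hence "f j < f i \<or> f j > f k" using fik by auto
      thus False
      proof
        assume "f j < f i" hence "g j < g i" using w ijk h unfolding word_le_def by blast
        thus False using h by auto
      next
        assume "f j > f k" hence "g k < g j" using w ijk h unfolding word_le_def by blast
        thus False using h by auto
      qed
    qed
    hence "simT T i j" "simT T j k" using linext_eq[OF f ijk(1,2)] linext_eq[OF f ijk(2,3)] fik by auto
    thus "simT T i j \<and> simT T j k" by auto
  qed
  show ?thesis unfolding Tpartitions_def using p A B C by blast
qed

lemma le_disj:
  assumes f: "f \<in> linext n T" and h: "h \<in> linext n T" and ne: "f \<noteq> h"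
    and w1: "word_le n g f" and w2: "word_le n g h"
  shows False
proof -
  have "\<not> (\<forall>i\<in>{1..n}. \<forall>j\<in>{1..n}. f i \<le> f j \<longleftrightarrow> h i \<le> h j)"
    using packed_unique[of n f h] linext_packed[OF f] linext_packed[OF h] ne by blast
  then obtain i j where ij: "i\<in>{1..n}" "j\<in>{1..n}" "\<not> (f i \<le> f j \<longleftrightarrow> h i \<le> h j)" by blast
  have eq: "f i = f j \<longleftrightarrow> h i = h j" using linext_eq[OF f ij(1,2)] linext_eq[OF h ij(1,2)] by simp
  have sym: False if A: "a\<in>{1..n}" "b\<in>{1..n}" "F a < F b" "H b < H a"
     "word_le n g F" "word_le n g H" for a b F H
  proof -
    have "g a \<le> g b" using A(1-3,5) unfolding word_le_def by (meson less_imp_le)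
    moreover have "g b \<le> g a" using A(1,2,4,6) unfolding word_le_def by (meson less_imp_le)
    moreover have "a \<noteq> b" using that by auto
    moreover have "a < b \<longrightarrow> g b < g a" using A(1,2,4,6) unfolding word_le_def by blast
    moreover have "b < a \<longrightarrow> g a < g b" using A(1,2,3,5) unfolding word_le_def by blast
    ultimately show False by linarith
  qed
  show False
  proof (cases "f i \<le> f j")
    case True
    hence "f i < f j" "h j < h i" using ij eq by auto
    thus False using sym[of i j f h] ij w1 w2 by blast
  next
    case False
    hence "h i < h j" "f j < f i" using ij eq by auto
    thus False using sym[of i j h f] ij w1 w2 by blast
  qed
qed

lemma cover:
  assumes g: "g \<in> Tpartitions n T"
  shows "\<exists>f\<in>linext n T. word_le n g f"
proof -
  define A where "A = {1..n::nat}"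
  have finA: "finite A" unfolding A_def by simp
  have gp: "packed n g" using g unfolding Tpartitions_def by blast
  have gmono: "g i \<le> g j" if "i \<in> A" "j \<in> A" "leT T i j" for i j
    using g that unfolding Tpartitions_def A_def by blast
  have gstrict: "g i < g j" if "i \<in> A" "j \<in> A" "ltT T i j" "i > j" for i j
    using g that unfolding Tpartitions_def A_def by blast
  have gconv: "simT T i j" if "i \<in> A" "j \<in> A" "k \<in> A" "i < j" "j < k" "simT T i k"
      "g i = g j" "g j = g k" for i j k
    using g that unfolding Tpartitions_def A_def by blast
  have gsim: "g i = g j" if "i \<in> A" "j \<in> A" "simT T i j" for i j
    using gmono[OF that(1,2)] gmono[OF that(2,1)] that(3) unfolding simT_def by force
  define m where "m i = Min {k\<in>A. simT T i k}" for i
  have m_in: "m i \<in> A \<and> simT T i (m i) \<and> m i \<le> i" if "i \<in> A" for i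
  proof -
    have ne: "i \<in> {k\<in>A. simT T i k}" using that simT_refl by auto
    have fin: "finite {k\<in>A. simT T i k}" using finA by simp
    have "m i \<in> {k\<in>A. simT T i k}" unfolding m_def using Min_in[OF fin] ne by blast
    moreover have "m i \<le> i" unfolding m_def using Min_le[OF fin ne] .
    ultimately show ?thesis by auto
  qed
  have m_eq: "m i = m j" if "simT T i j" for i j
  proof -
    have "{k\<in>A. simT T i k} = {k\<in>A. simT T j k}"
      using that simT_sym simT_trans by blast
    thus ?thesis unfolding m_def by simp
  qed
  have m_sim: "simT T i j" if "i \<in> A" "j \<in> A" "m i = m j" for i j
    using m_in[OF that(1)] m_in[OF that(2)] that(3) simT_sym simT_trans by metis
  have mA: "1 \<le> m i \<and> m i < n + 1" if "i \<in> A" for i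
    using m_in[OF that] unfolding A_def by auto
  have bad: "simT T i j" if "i \<in> A" "j \<in> A" "g i = g j" "i < j" "m j < m i" for i j
  proof -
    define a where "a = m j"
    have a: "a \<in> A" "simT T j a" using m_in[OF that(2)] unfolding a_def by auto
    have "g a = g j" using gsim[OF a(1) that(2)] a(2) simT_sym by auto
    moreover have "a < i" using that(5) m_in[OF that(1)] unfolding a_def by auto
    ultimately have "simT T a i" using gconv[OF a(1) that(1) that(2) _ that(4)] a(2) simT_sym that(3)
      by auto
    thus ?thesis using a(2) simT_sym simT_trans by metis
  qed
  define key where "key i = g i * (n+1) + m i" for i
  have kdiv: "key i div (n+1) = g i" "key i mod (n+1) = m i" if "i \<in> A" for i
  proof -
    have e: "key i = m i + g i * (n+1)" unfolding key_def by simp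
    have "m i div (n+1) = 0" "m i mod (n+1) = m i" using mA[OF that] by auto
    thus "key i div (n+1) = g i" "key i mod (n+1) = m i"
      unfolding e by (simp_all only: div_mult_self1[of "n+1"] mod_mult_self1)
  qed
  have K1: "key i = key j \<longleftrightarrow> g i = g j \<and> m i = m j" if "i \<in> A" "j \<in> A" for i j
    using kdiv[OF that(1)] kdiv[OF that(2)] unfolding key_def by metis
  have K2: "g i \<le> g j" if "i \<in> A" "j \<in> A" "key i \<le> key j" for i j
    using div_le_mono[OF that(3), of "n+1"] kdiv[OF that(1)] kdiv[OF that(2)] by simp
  have K3: "key i < key j" if "i \<in> A" "j \<in> A" "g i < g j" for i j
  proof -
    have "key i < (g i + 1) * (n+1)" using mA[OF that(1)] unfolding key_def by simp
    also have "\<dots> \<le> g j * (n+1)" using that(3) by (intro mult_right_mono) auto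
    also have "\<dots> \<le> key j" unfolding key_def by simp
    finally show ?thesis .
  qed
  have K4: "key i < key j \<longleftrightarrow> m i < m j" if "g i = g j" for i j
    using that unfolding key_def by simp
  define S where "S = key ` A"
  have finS: "finite S" unfolding S_def using finA by simp
  define f where "f i = (if i \<in> A then rk S (key i) else 0)" for i
  have kS: "key i \<in> S" if "i \<in> A" for i using that unfolding S_def by auto
  have f_le: "f i \<le> f j \<longleftrightarrow> key i \<le> key j" if "i \<in> A" "j \<in> A" for i j
    using rk_le_iff[OF finS kS[OF that(1)] kS[OF that(2)]] that unfolding f_def by simp
  have f_eq: "f i = f j \<longleftrightarrow> key i = key j" if "i \<in> A" "j \<in> A" for i j
    using rk_eq_iff[OF finS kS[OF that(1)] kS[OF that(2)]] that unfolding f_def by simp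
  have f_lt: "f i < f j \<longleftrightarrow> key i < key j" if "i \<in> A" "j \<in> A" for i j
    using f_le[OF that(2) that(1)] by auto
  have fp: "packed n f"
  proof -
    have "f ` A = rk S ` S" unfolding S_def f_def by (auto simp: image_image)
    hence "f ` {1..n} = {1..card S}" using rk_image[OF finS] unfolding A_def by simp
    moreover have "\<forall>i. i \<notin> {1..n} \<longrightarrow> f i = 0" unfolding f_def A_def by simp
    ultimately show ?thesis unfolding packed_def by blast
  qed
  have fsim: "f i = f j \<longleftrightarrow> simT T i j" if "i \<in> A" "j \<in> A" for i j
    using f_eq[OF that] K1[OF that] m_sim[OF that] gsim[OF that] m_eq by blast
  have flt: "f i < f j" if "i \<in> A" "j \<in> A" "ltT T i j" for i j
  proof -
    have le: "g i \<le> g j" using gmono[OF that(1,2)] that(3) unfolding ltT_def by blast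
    have nsim: "\<not> simT T i j" using that(3) unfolding ltT_def simT_def by blast
    show ?thesis
    proof (cases "g i < g j")
      case True thus ?thesis using K3[OF that(1,2)] f_lt[OF that(1,2)] by simp
    next
      case False
      hence geq: "g i = g j" using le by simp
      have "i \<noteq> j" using nsim simT_refl by auto
      moreover have "\<not> i > j" using gstrict[OF that] geq by auto
      ultimately have "i < j" by simp
      hence "\<not> m j < m i" using bad[OF that(1,2) geq] nsim by auto
      moreover have "m i \<noteq> m j" using m_sim[OF that(1,2)] nsim by auto
      ultimately have "m i < m j" by simp
      thus ?thesis using K4[OF geq] f_lt[OF that(1,2)] by simp
    qed
  qed
  have fl: "f \<in> linext n T"
    unfolding linext_def using fp fsim flt unfolding A_def by blast
  have wl: "word_le n g f" unfolding word_le_def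
  proof (intro ballI conjI impI)
    fix i j assume ij: "i \<in> {1..n}" "j \<in> {1..n}"
    hence ijA: "i \<in> A" "j \<in> A" unfolding A_def by auto
    { assume "f i \<le> f j" thus "g i \<le> g j" using f_le[OF ijA] K2[OF ijA] by simp }
    { assume "f j < f i \<and> i < j"
      hence lt: "key j < key i" "i < j" using f_lt[OF ijA(2,1)] by auto
      have "g j \<le> g i" using K2[OF ijA(2,1)] lt by simp
      moreover have "g j \<noteq> g i"
      proof
        assume geq: "g j = g i"
        hence "m j < m i" using K4[OF geq] lt by simp
        hence "simT T i j" using bad[OF ijA geq[symmetric] lt(2)] by simp
        hence "m i = m j" by (rule m_eq)
        thus False using \<open>m j < m i\<close> by simp
      qed
      ultimately show "g j < g i" by simp }
    { assume "f i = f j" thus "g i = g j" using f_eq[OF ijA] K1[OF ijA] by simp }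
  qed
  show ?thesis using fl wl by blast
qed

theorem corollary20:
  fixes n :: nat and T :: "nat topology"
  assumes "topspace T = {1..n}"
  shows "Tpartitions n T = (\<Union>f\<in>linext n T. {g. packed n g \<and> word_le n g f})
       \<and> disjoint_family_on (\<lambda>f. {g. packed n g \<and> word_le n g f}) (linext n T)
       \<and> Tpartitions n T = (\<Union>f\<in>linext n T. Tpartitions n (topology_of_word n f))
       \<and> disjoint_family_on (\<lambda>f. Tpartitions n (topology_of_word n f)) (linext n T)"
proof -
  have E: "Tpartitions n T = (\<Union>f\<in>linext n T. {g. packed n g \<and> word_le n g f})"
  proof
    show "Tpartitions n T \<subseteq> (\<Union>f\<in>linext n T. {g. packed n g \<and> word_le n g f})"
    proof
      fix g assume g: "g \<in> Tpartitions n T"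
      have "packed n g" using g unfolding Tpartitions_def by blast
      thus "g \<in> (\<Union>f\<in>linext n T. {g. packed n g \<and> word_le n g f})"
        using cover[OF g] by blast
    qed
    show "(\<Union>f\<in>linext n T. {g. packed n g \<and> word_le n g f}) \<subseteq> Tpartitions n T"
      using le_imp_Tpart by blast
  qed
  have D: "disjoint_family_on (\<lambda>f. {g. packed n g \<and> word_le n g f}) (linext n T)"
    unfolding disjoint_family_on_def using le_disj by blast
  have tw: "(\<lambda>f. Tpartitions n (topology_of_word n f)) = (\<lambda>f. {g. packed n g \<and> word_le n g f})"
    using Tpart_tow by blast
  show ?thesis using E D unfolding tw by blast
qed

end
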